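(* Let $(\mathbb{X},A)$ be a quantum graph. Then the eigenspaces of $D_A$ and of $D^A$ are invariant under the action of $\operatorname{Qut}(\mathbb{X},A)$; that is, the orthogonal projections onto the eigenspaces of $D_A$ (and of $D^A$) are intertwiners of the fundamental representation $U$ of $\operatorname{Qut}(\mathbb{X},A)$, i.e. they commute with $U$.
   Context: A finite quantum set $\mathbb{X}$ is a finite-dimensional C*-algebra $C(\mathbb{X})$ with its unique tracial positive functional $\psi$ such that, for $\langle x,y\rangle=\psi(x^*y)$ on $\ell^2(\mathbb{X}):=C(\mathbb{X})$, the multiplication $m$ satisfies $mm^*=\mathrm{id}$; $\eta$ is the unit. A quantum graph is $(\mathbb{X},A)$ with $A\bullet A=A=\bar A$, where $A\bullet B=m(A\otimes B)m^*$ and $\bar Af=(A(f^* ))^*$. The degree operators are $D_A=m(A\eta\otimes I_{\ell^2(\mathbb{X})})$ and $D^A=m(A^*\eta\otimes I_{\ell^2(\mathbb{X})})$ (i.e. left multiplication by $A\eta$, resp. $A^*\eta$). $\operatorname{Qut}(\mathbb{X},A)$ is the compact matrix quantum group whose Hopf $*$-algebra is the universal $*$-algebra generated by the entries of a matrix $U$ (its fundamental representation, acting on $\ell^2(\mathbb{X})$) subject to $U$ unitary, $m(U\otimes U)=Um$, $U\eta=\eta$, $UA=AU$. An operator $T$ on $\ell^2(\mathbb{X})$ is an intertwiner of $U$ if $(T\otimes1)U=U(T\otimes1)$. *)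

theory Defs
  imports Complex_Main
begin

text \<open>
  By the structure theorem, a finite-dimensional
  C*-algebra is C(X) = M_{n_0} (+) ... (+) M_{n_{r-1}}; it is encoded by the list ns of block
  sizes.  An element of C(X) (or of C(X) tensor B for an algebra B) is a coefficient function
  on the index set qcar ns: (i,j,k) stands for the matrix unit e^(i)_{jk}.
  The tracial functional with m m^* = id is psi = sum_i n_i Tr_i.
\<close>

type_synonym qidx = "nat \<times> nat \<times> nat"

definition qcar :: "nat list \<Rightarrow> qidx set" where
  "qcar ns = {(i,j,k). i < length ns \<and> j < ns ! i \<and> k < ns ! i}"

definition nsz :: "nat list \<Rightarrow> qidx \<Rightarrow> nat" where
  "nsz ns p = ns ! fst p"

definition finite_quantum_set :: "nat list \<Rightarrow> bool" where
  "finite_quantum_set ns \<longleftrightarrow> (\<forall>n\<in>set ns. 0 < n)"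

text \<open>Multiplication in C(X) tensor R (blockwise matrix multiplication), R any ring.\<close>
definition qmult :: "nat list \<Rightarrow> (qidx \<Rightarrow> 'r::semiring_0) \<Rightarrow> (qidx \<Rightarrow> 'r) \<Rightarrow> qidx \<Rightarrow> 'r" where
  "qmult ns x y = (\<lambda>(i,j,k). if (i,j,k) \<in> qcar ns
       then (\<Sum>l<ns ! i. x (i,j,l) * y (i,l,k)) else 0)"

definition qunit :: "nat list \<Rightarrow> qidx \<Rightarrow> complex" where
  "qunit ns = (\<lambda>(i,j,k). if (i,j,k) \<in> qcar ns \<and> j = k then 1 else 0)"

definition qstar :: "nat list \<Rightarrow> (qidx \<Rightarrow> complex) \<Rightarrow> qidx \<Rightarrow> complex" where
  "qstar ns x = (\<lambda>(i,j,k). if (i,j,k) \<in> qcar ns then cnj (x (i,k,j)) else 0)"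

definition qpsi :: "nat list \<Rightarrow> (qidx \<Rightarrow> complex) \<Rightarrow> complex" where
  "qpsi ns x = (\<Sum>p\<in>qcar ns. if fst (snd p) = snd (snd p)
                   then of_nat (nsz ns p) * x p else 0)"

definition qinner :: "nat list \<Rightarrow> (qidx \<Rightarrow> complex) \<Rightarrow> (qidx \<Rightarrow> complex) \<Rightarrow> complex" where
  "qinner ns x y = qpsi ns (qmult ns (qstar ns x) y)"

definition qbasis :: "qidx \<Rightarrow> qidx \<Rightarrow> 'r::zero_neq_one" where
  "qbasis q = (\<lambda>p. if p = q then 1 else 0)"

text \<open>Operators on l^2(X) are given by their kernels K p q w.r.t. the basis e_q:
  T e_q = sum_p K p q e_p.  Only the values on qcar ns x qcar ns matter.\<close>

definition qapp :: "nat list \<Rightarrow> (qidx \<Rightarrow> qidx \<Rightarrow> complex) \<Rightarrow> (qidx \<Rightarrow> complex) \<Rightarrow> qidx \<Rightarrow> complex" where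
  "qapp ns K x = (\<lambda>p. if p \<in> qcar ns then (\<Sum>q\<in>qcar ns. K p q * x q) else 0)"

definition qop_eq :: "nat list \<Rightarrow> (qidx \<Rightarrow> qidx \<Rightarrow> 'r) \<Rightarrow> (qidx \<Rightarrow> qidx \<Rightarrow> 'r) \<Rightarrow> bool" where
  "qop_eq ns K L \<longleftrightarrow> (\<forall>p\<in>qcar ns. \<forall>q\<in>qcar ns. K p q = L p q)"

definition qcomp :: "nat list \<Rightarrow> (qidx \<Rightarrow> qidx \<Rightarrow> complex) \<Rightarrow> (qidx \<Rightarrow> qidx \<Rightarrow> complex) \<Rightarrow> qidx \<Rightarrow> qidx \<Rightarrow> complex" where
  "qcomp ns K L = (\<lambda>p r. \<Sum>q\<in>qcar ns. K p q * L q r)"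

text \<open>Hilbert space adjoint w.r.t. <x,y> = psi(x^* y) = sum_p n_p cnj(x p) y p.\<close>
definition qadj :: "nat list \<Rightarrow> (qidx \<Rightarrow> qidx \<Rightarrow> complex) \<Rightarrow> qidx \<Rightarrow> qidx \<Rightarrow> complex" where
  "qadj ns K = (\<lambda>p q. of_nat (nsz ns q) / of_nat (nsz ns p) * cnj (K q p))"

definition qcol :: "nat list \<Rightarrow> (qidx \<Rightarrow> qidx \<Rightarrow> 'r::zero) \<Rightarrow> qidx \<Rightarrow> qidx \<Rightarrow> 'r" where
  "qcol ns K q = (\<lambda>p. if p \<in> qcar ns then K p q else 0)"

text \<open>Schur product A \<bullet> B = m (A (x) B) m^*, where
  m^* z = sum_{q,r} <e_q e_r, z> / (n_q n_r) e_q (x) e_r is the adjoint of m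
  (the vectors e_q / sqrt n_q form an orthonormal basis).\<close>
definition qschur :: "nat list \<Rightarrow> (qidx \<Rightarrow> qidx \<Rightarrow> complex) \<Rightarrow> (qidx \<Rightarrow> qidx \<Rightarrow> complex) \<Rightarrow> qidx \<Rightarrow> qidx \<Rightarrow> complex" where
  "qschur ns A B = (\<lambda>p s. \<Sum>q\<in>qcar ns. \<Sum>r\<in>qcar ns.
      qinner ns (qmult ns (qbasis q) (qbasis r)) (qbasis s)
        / (of_nat (nsz ns q) * of_nat (nsz ns r))
      * qmult ns (qcol ns A q) (qcol ns B r) p)"

definition qbar :: "nat list \<Rightarrow> (qidx \<Rightarrow> qidx \<Rightarrow> complex) \<Rightarrow> qidx \<Rightarrow> qidx \<Rightarrow> complex" where
  "qbar ns A = (\<lambda>p s. qstar ns (qapp ns A (qstar ns (qbasis s))) p)"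

definition quantum_graph :: "nat list \<Rightarrow> (qidx \<Rightarrow> qidx \<Rightarrow> complex) \<Rightarrow> bool" where
  "quantum_graph ns A \<longleftrightarrow> finite_quantum_set ns \<and>
     qop_eq ns (qschur ns A A) A \<and> qop_eq ns (qbar ns A) A"

definition degL :: "nat list \<Rightarrow> (qidx \<Rightarrow> qidx \<Rightarrow> complex) \<Rightarrow> qidx \<Rightarrow> qidx \<Rightarrow> complex" where
  "degL ns A = (\<lambda>p q. qmult ns (qapp ns A (qunit ns)) (qbasis q) p)"

definition degR :: "nat list \<Rightarrow> (qidx \<Rightarrow> qidx \<Rightarrow> complex) \<Rightarrow> qidx \<Rightarrow> qidx \<Rightarrow> complex" where
  "degR ns A = (\<lambda>p q. qmult ns (qapp ns (qadj ns A) (qunit ns)) (qbasis q) p)"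

definition eigenspace :: "nat list \<Rightarrow> (qidx \<Rightarrow> qidx \<Rightarrow> complex) \<Rightarrow> complex \<Rightarrow> (qidx \<Rightarrow> complex) set" where
  "eigenspace ns D lam = {x. (\<forall>p. p \<notin> qcar ns \<longrightarrow> x p = 0) \<and> qapp ns D x = (\<lambda>p. lam * x p)}"

definition is_orth_proj :: "nat list \<Rightarrow> (qidx \<Rightarrow> qidx \<Rightarrow> complex) \<Rightarrow> (qidx \<Rightarrow> complex) set \<Rightarrow> bool" where
  "is_orth_proj ns P S \<longleftrightarrow> qop_eq ns (qcomp ns P P) P \<and> qop_eq ns (qadj ns P) P
      \<and> range (qapp ns P) = S"

text \<open>Unital complex *-algebras: a ring 'b with a central unital ring homomorphism
  sc : complex \<Rightarrow> 'b (scalars act by c \<cdot> x = sc c * x) and a conjugate-linear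
  anti-multiplicative involution st.\<close>
definition star_algebra :: "(complex \<Rightarrow> 'b::ring_1) \<Rightarrow> ('b \<Rightarrow> 'b) \<Rightarrow> bool" where
  "star_algebra sc st \<longleftrightarrow>
     (\<forall>a b. sc (a + b) = sc a + sc b) \<and> (\<forall>a b. sc (a * b) = sc a * sc b) \<and> sc 1 = 1 \<and>
     (\<forall>a x. sc a * x = x * sc a) \<and>
     (\<forall>x y. st (x + y) = st x + st y) \<and> (\<forall>x y. st (x * y) = st y * st x) \<and>
     (\<forall>x. st (st x) = x) \<and> (\<forall>a x. st (sc a * x) = sc (cnj a) * st x)"

text \<open>U :: qidx \<Rightarrow> qidx \<Rightarrow> 'b is an element of B(l^2(X)) (x) B,
  U (e_q (x) 1) = sum_p e_p (x) U p q, satisfying the defining relations of Qut(X,A).\<close>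
definition qut_rel :: "nat list \<Rightarrow> (qidx \<Rightarrow> qidx \<Rightarrow> complex) \<Rightarrow> (complex \<Rightarrow> 'b::ring_1) \<Rightarrow> ('b \<Rightarrow> 'b)
     \<Rightarrow> (qidx \<Rightarrow> qidx \<Rightarrow> 'b) \<Rightarrow> bool" where
  "qut_rel ns A sc st U \<longleftrightarrow>
     (let Us = (\<lambda>p q. sc (of_nat (nsz ns q) / of_nat (nsz ns p)) * st (U q p)) in
       (\<forall>p\<in>qcar ns. \<forall>q\<in>qcar ns. (\<Sum>r\<in>qcar ns. U p r * Us r q) = (if p = q then 1 else 0)) \<and>
       (\<forall>p\<in>qcar ns. \<forall>q\<in>qcar ns. (\<Sum>r\<in>qcar ns. Us p r * U r q) = (if p = q then 1 else 0))) \<and>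
     (\<forall>q\<in>qcar ns. \<forall>r\<in>qcar ns. \<forall>p\<in>qcar ns.
        qmult ns (qcol ns U q) (qcol ns U r) p
          = (\<Sum>t\<in>qcar ns. U p t * sc (qmult ns (qbasis q) (qbasis r) t))) \<and>
     (\<forall>p\<in>qcar ns. (\<Sum>t\<in>qcar ns. U p t * sc (qunit ns t)) = sc (qunit ns p)) \<and>
     (\<forall>p\<in>qcar ns. \<forall>q\<in>qcar ns. (\<Sum>r\<in>qcar ns. U p r * sc (A r q)) = (\<Sum>r\<in>qcar ns. sc (A p r) * U r q))"

text \<open>(T (x) 1) U = U (T (x) 1).\<close>
definition qintertwines :: "nat list \<Rightarrow> (complex \<Rightarrow> 'b::ring_1) \<Rightarrow> (qidx \<Rightarrow> qidx \<Rightarrow> 'b)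
     \<Rightarrow> (qidx \<Rightarrow> qidx \<Rightarrow> complex) \<Rightarrow> bool" where
  "qintertwines ns sc U T \<longleftrightarrow>
     (\<forall>p\<in>qcar ns. \<forall>q\<in>qcar ns. (\<Sum>r\<in>qcar ns. sc (T p r) * U r q) = (\<Sum>r\<in>qcar ns. U p r * sc (T r q)))"

end

theory Submission
  imports Defs
begin


lemma finite_qcar: "finite (qcar ns)"
proof -
  have "qcar ns \<subseteq> {..<length ns} \<times> {..<sum_list ns + 1} \<times> {..<sum_list ns + 1}"
    using elem_le_sum_list[of _ ns] by (fastforce simp: qcar_def)
  then show ?thesis by (rule finite_subset) auto
qed

lemma nsz_pos: "p \<in> qcar ns \<Longrightarrow> nsz ns p > 0"
  by (auto simp: qcar_def nsz_def)

lemma ite_mult1: "(if b then 1 else 0) * (x::'a::semiring_1) = (if b then x else 0)" by simp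
lemma ite_mult2: "(x::'a::semiring_1) * (if b then 1 else 0) = (if b then x else 0)" by simp

definition mm :: "qidx set \<Rightarrow> (qidx \<Rightarrow> qidx \<Rightarrow> 'b::ring_1) \<Rightarrow> (qidx \<Rightarrow> qidx \<Rightarrow> 'b) \<Rightarrow> qidx \<Rightarrow> qidx \<Rightarrow> 'b" where
  "mm I X Y = (\<lambda>p q. \<Sum>r\<in>I. X p r * Y r q)"

definition Lf :: "(complex \<Rightarrow> 'b::ring_1) \<Rightarrow> (qidx \<Rightarrow> qidx \<Rightarrow> complex) \<Rightarrow> qidx \<Rightarrow> qidx \<Rightarrow> 'b" where
  "Lf sc T = (\<lambda>p q. sc (T p q))"

definition adjB :: "nat list \<Rightarrow> (complex \<Rightarrow> 'b::ring_1) \<Rightarrow> ('b \<Rightarrow> 'b) \<Rightarrow> (qidx \<Rightarrow> qidx \<Rightarrow> 'b) \<Rightarrow> qidx \<Rightarrow> qidx \<Rightarrow> 'b" where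
  "adjB ns sc st X = (\<lambda>p q. sc (of_nat (nsz ns q) / of_nat (nsz ns p)) * st (X q p))"

definition eqI :: "qidx set \<Rightarrow> (qidx \<Rightarrow> qidx \<Rightarrow> 'b) \<Rightarrow> (qidx \<Rightarrow> qidx \<Rightarrow> 'b) \<Rightarrow> bool" where
  "eqI I X Y \<longleftrightarrow> (\<forall>p\<in>I. \<forall>q\<in>I. X p q = Y p q)"

definition idm :: "qidx \<Rightarrow> qidx \<Rightarrow> 'b::ring_1" where
  "idm = (\<lambda>p q. if p = q then 1 else 0)"

lemma eqI_refl: "eqI I X X" by (simp add: eqI_def)
lemma eqI_sym: "eqI I X Y \<Longrightarrow> eqI I Y X" by (simp add: eqI_def)
lemma eqI_trans[trans]: "eqI I X Y \<Longrightarrow> eqI I Y Z \<Longrightarrow> eqI I X Z" by (simp add: eqI_def)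

lemma mm_assoc: "finite I \<Longrightarrow> mm I (mm I X Y) Z = mm I X (mm I Y Z)"
  unfolding mm_def
  by (auto simp: sum_distrib_left sum_distrib_right mult.assoc intro!: ext sum.swap)

lemma mm_cong: "eqI I X X' \<Longrightarrow> eqI I Y Y' \<Longrightarrow> eqI I (mm I X Y) (mm I X' Y')"
  unfolding eqI_def mm_def by (auto intro!: sum.cong)

lemma mm_idl: "finite I \<Longrightarrow> eqI I (mm I idm X) X"
  unfolding eqI_def mm_def idm_def by (simp add: ite_mult1 sum.delta cong: if_cong)

lemma mm_idr: "finite I \<Longrightarrow> eqI I (mm I X idm) X"
  unfolding eqI_def mm_def idm_def by (simp add: ite_mult2 sum.delta' cong: if_cong)

lemma comm_inverse:
  assumes I: "finite I" and VW: "eqI I (mm I V W) idm" and WV: "eqI I (mm I W V) idm"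
    and XV: "eqI I (mm I X V) (mm I V X)"
  shows "eqI I (mm I X W) (mm I W X)"
proof -
  have "eqI I (mm I X W) (mm I (mm I W V) (mm I X W))"
    by (rule eqI_sym, rule eqI_trans[OF mm_cong[OF WV eqI_refl] mm_idl[OF I]])
  also have "mm I (mm I W V) (mm I X W) = mm I W (mm I (mm I V X) W)"
    by (simp add: mm_assoc[OF I])
  also have "eqI I \<dots> (mm I W (mm I (mm I X V) W))"
    by (intro mm_cong eqI_refl eqI_sym[OF XV])
  also have "mm I W (mm I (mm I X V) W) = mm I W (mm I X (mm I V W))"
    by (simp add: mm_assoc[OF I])
  also have "eqI I \<dots> (mm I W X)"
    by (intro mm_cong eqI_refl eqI_trans[OF mm_cong[OF eqI_refl VW] mm_idr[OF I]])
  finally show ?thesis .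
qed

context
  fixes sc :: "complex \<Rightarrow> 'b::ring_1" and st :: "'b \<Rightarrow> 'b"
  assumes SA: "star_algebra sc st"
begin

lemma sc_add: "sc (a + b) = sc a + sc b" using SA unfolding star_algebra_def by blast
lemma sc_mult: "sc (a * b) = sc a * sc b" using SA unfolding star_algebra_def by blast
lemma sc_one: "sc 1 = 1" using SA unfolding star_algebra_def by blast
lemma sc_central: "sc a * x = x * sc a" using SA unfolding star_algebra_def by blast
lemma st_add: "st (x + y) = st x + st y" using SA unfolding star_algebra_def by blast
lemma st_mult: "st (x * y) = st y * st x" using SA unfolding star_algebra_def by blast
lemma st_st: "st (st x) = x" using SA unfolding star_algebra_def by blast
lemma st_scm: "st (sc a * x) = sc (cnj a) * st x" using SA unfolding star_algebra_def by blast

lemma sc_zero: "sc 0 = 0"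
  using sc_add[of 0 0] by simp
lemma sc_uminus: "sc (- a) = - sc a"
  using sc_add[of a "-a"] sc_zero by (simp add: add_eq_0_iff2)
lemma sc_diff: "sc (a - b) = sc a - sc b"
  using sc_add[of a "-b"] sc_uminus[of b] by simp
lemma sc_sum: "sc (sum f S) = (\<Sum>x\<in>S. sc (f x))"
  by (induction S rule: infinite_finite_induct) (auto simp: sc_zero sc_add)
lemma st_zero: "st 0 = 0"
  using st_add[of 0 0] by simp
lemma st_sum: "st (sum f S) = (\<Sum>x\<in>S. st (f x))"
  by (induction S rule: infinite_finite_induct) (auto simp: st_zero st_add)
lemma st_one: "st 1 = 1"
proof -
  have "st (st 1 * 1) = st 1 * st (st 1)" by (rule st_mult)
  then have "1 = st 1 * 1" by (simp add: st_st)
  then show ?thesis by simp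
qed
lemma st_sc: "st (sc a) = sc (cnj a)"
  using st_scm[of a 1] by (simp add: st_one)

lemma sc_ratio:
  assumes "(n::nat) > 0" shows "sc (of_nat m / of_nat n) * sc (of_nat n / of_nat k) = sc (of_nat m / of_nat k)"
  using assms by (simp add: sc_mult[symmetric])

lemma Lf_mm: "mm I (Lf sc T) (Lf sc S) = Lf sc (\<lambda>p r. \<Sum>q\<in>I. T p q * S q r)"
  by (simp add: mm_def Lf_def sc_sum sc_mult)

lemma Lf_mm_qcomp: "mm (qcar ns) (Lf sc T) (Lf sc S) = Lf sc (qcomp ns T S)"
  by (simp add: Lf_mm qcomp_def)

lemma adjB_mm:
  assumes p: "p \<in> qcar ns" and q: "q \<in> qcar ns"
  shows "adjB ns sc st (mm (qcar ns) X Y) p q = mm (qcar ns) (adjB ns sc st Y) (adjB ns sc st X) p q"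
proof -
  have "adjB ns sc st (mm (qcar ns) X Y) p q
     = (\<Sum>r\<in>qcar ns. sc (of_nat (nsz ns q) / of_nat (nsz ns p)) * (st (Y r p) * st (X q r)))"
    by (simp add: adjB_def mm_def st_sum st_mult sum_distrib_left)
  also have "\<dots> = (\<Sum>r\<in>qcar ns. (sc (of_nat (nsz ns r) / of_nat (nsz ns p)) * st (Y r p)) *
                 (sc (of_nat (nsz ns q) / of_nat (nsz ns r)) * st (X q r)))"
  proof (rule sum.cong[OF refl])
    fix r assume r: "r \<in> qcar ns"
    have "(sc (of_nat (nsz ns r) / of_nat (nsz ns p)) * st (Y r p)) *
                 (sc (of_nat (nsz ns q) / of_nat (nsz ns r)) * st (X q r))
        = (sc (of_nat (nsz ns q) / of_nat (nsz ns r)) * sc (of_nat (nsz ns r) / of_nat (nsz ns p))) * (st (Y r p) * st (X q r))"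
      (is "(?a * ?y) * (?b * ?x) = _")
    proof -
      have "(?a * ?y) * (?b * ?x) = ?a * ((?y * ?b) * ?x)" by (simp add: mult.assoc)
      also have "\<dots> = ?a * ((?b * ?y) * ?x)" by (simp add: sc_central)
      also have "\<dots> = (?a * ?b) * (?y * ?x)" by (simp add: mult.assoc)
      also have "?a * ?b = ?b * ?a" by (rule sc_central)
      finally show ?thesis .
    qed
    also have "\<dots> = sc (of_nat (nsz ns q) / of_nat (nsz ns p)) * (st (Y r p) * st (X q r))"
      using sc_ratio[OF nsz_pos[OF r]] by simp
    finally show "sc (of_nat (nsz ns q) / of_nat (nsz ns p)) * (st (Y r p) * st (X q r)) =
         (sc (of_nat (nsz ns r) / of_nat (nsz ns p)) * st (Y r p)) *
         (sc (of_nat (nsz ns q) / of_nat (nsz ns r)) * st (X q r))" by simp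
  qed
  finally show ?thesis by (simp add: mm_def adjB_def)
qed

lemma adjB_mm_eqI: "eqI (qcar ns) (adjB ns sc st (mm (qcar ns) X Y)) (mm (qcar ns) (adjB ns sc st Y) (adjB ns sc st X))"
  using adjB_mm by (simp add: eqI_def)

lemma adjB_adjB:
  assumes p: "p \<in> qcar ns" and q: "q \<in> qcar ns"
  shows "adjB ns sc st (adjB ns sc st X) p q = X p q"
proof -
  have "adjB ns sc st (adjB ns sc st X) p q
     = (sc (of_nat (nsz ns q) / of_nat (nsz ns p)) * sc (of_nat (nsz ns p) / of_nat (nsz ns q))) * X p q"
    by (simp add: adjB_def st_scm st_st mult.assoc)
  also have "\<dots> = X p q" using sc_ratio[OF nsz_pos[OF p], of "nsz ns q" "nsz ns q"] nsz_pos[OF q]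
    by (simp add: sc_one)
  finally show ?thesis .
qed

lemma adjB_Lf: "adjB ns sc st (Lf sc T) = Lf sc (qadj ns T)"
  by (auto simp: adjB_def Lf_def qadj_def st_sc sc_mult[symmetric] intro!: ext arg_cong[where f=sc])

lemma adjB_cong: "eqI (qcar ns) X Y \<Longrightarrow> eqI (qcar ns) (adjB ns sc st X) (adjB ns sc st Y)"
  by (simp add: eqI_def adjB_def)

end



lemma sum_single: "finite I \<Longrightarrow> r0 \<in> I \<Longrightarrow> (\<Sum>r\<in>I. w r * (if r = r0 then a else 0)) = w r0 * (a::complex)"
  by (simp add: if_distrib sum.delta cong: if_cong)

lemma rowspace:
  fixes I :: "'i set" and K :: "'k set" and g :: "'k \<Rightarrow> 'i \<Rightarrow> complex"
  assumes "finite I" "finite K"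
    and "\<forall>x. (\<forall>k\<in>K. (\<Sum>r\<in>I. g k r * x r) = 0) \<longrightarrow> (\<Sum>r\<in>I. f r * x r) = 0"
  shows "\<exists>c. \<forall>r\<in>I. f r = (\<Sum>k\<in>K. c k * g k r)"
  using assms(2,3)
proof (induction K arbitrary: f g rule: finite_induct)
  case empty
  show ?case
  proof (intro exI ballI)
    fix r0 assume r0: "r0 \<in> I"
    have "(\<Sum>r\<in>I. f r * (if r = r0 then 1 else 0)) = 0" using empty.prems by simp
    then show "f r0 = (\<Sum>k\<in>{}. (\<lambda>_. 0) k * g k r0)" using sum_single[OF assms(1) r0, of f 1] by simp
  qed
next
  case (insert k0 K)
  define h where "h = g k0"
  show ?case
  proof (cases "\<forall>r\<in>I. h r = 0")
    case True
    have "\<forall>x. (\<forall>k\<in>K. (\<Sum>r\<in>I. g k r * x r) = 0) \<longrightarrow> (\<Sum>r\<in>I. f r * x r) = 0"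
    proof (intro allI impI)
      fix x assume "\<forall>k\<in>K. (\<Sum>r\<in>I. g k r * x r) = 0"
      moreover have "(\<Sum>r\<in>I. g k0 r * x r) = 0" using True by (simp add: h_def)
      ultimately show "(\<Sum>r\<in>I. f r * x r) = 0" using insert.prems by blast
    qed
    then obtain c where c: "\<forall>r\<in>I. f r = (\<Sum>k\<in>K. c k * g k r)" using insert.IH by blast
    show ?thesis
    proof (intro exI ballI)
      fix r assume r: "r \<in> I"
      have "(\<Sum>k\<in>insert k0 K. (c(k0 := 0)) k * g k r) = (\<Sum>k\<in>K. (c(k0 := 0)) k * g k r)"
        using insert.hyps by simp
      also have "\<dots> = (\<Sum>k\<in>K. c k * g k r)" using insert.hyps by (intro sum.cong) auto
      finally show "f r = (\<Sum>k\<in>insert k0 K. (c(k0 := 0)) k * g k r)" using c r by simp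
    qed
  next
    case False
    then obtain r0 where r0: "r0 \<in> I" "h r0 \<noteq> 0" by blast
    define phi where "phi = (\<lambda>w::'i \<Rightarrow> complex. w r0 / h r0)"
    define x0 where "x0 = (\<lambda>r. if r = r0 then 1 / h r0 else 0)"
    have phi: "(\<Sum>r\<in>I. w r * x0 r) = phi w" for w
      unfolding x0_def phi_def using sum_single[OF assms(1) r0(1), of w "1 / h r0"] by simp
    have phih: "phi h = 1" using r0 by (simp add: phi_def)
    define g' where "g' = (\<lambda>k r. g k r - phi (g k) * h r)"
    define f' where "f' = (\<lambda>r. f r - phi f * h r)"
    have lin: "(\<Sum>r\<in>I. (w r - c * h r) * x r) = (\<Sum>r\<in>I. w r * x r) - c * (\<Sum>r\<in>I. h r * x r)" for w c x
      by (simp add: algebra_simps sum_subtractf sum_distrib_left)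
    have lin2: "(\<Sum>r\<in>I. w r * (x r - c * x0 r)) = (\<Sum>r\<in>I. w r * x r) - c * phi w" for w c x
      using phi[of w] by (simp add: algebra_simps sum_subtractf sum_distrib_left[symmetric])
    have "\<forall>x. (\<forall>k\<in>K. (\<Sum>r\<in>I. g' k r * x r) = 0) \<longrightarrow> (\<Sum>r\<in>I. f' r * x r) = 0"
    proof (intro allI impI)
      fix x assume xK: "\<forall>k\<in>K. (\<Sum>r\<in>I. g' k r * x r) = 0"
      define s where "s = (\<Sum>r\<in>I. h r * x r)"
      define y where "y = (\<lambda>r. x r - s * x0 r)"
      have "(\<Sum>r\<in>I. g k0 r * y r) = 0" unfolding y_def lin2 using phih by (simp add: s_def h_def)
      moreover have "\<forall>k\<in>K. (\<Sum>r\<in>I. g k r * y r) = 0"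
      proof
        fix k assume "k \<in> K"
        then have "(\<Sum>r\<in>I. g' k r * x r) = 0" using xK by blast
        then show "(\<Sum>r\<in>I. g k r * y r) = 0"
          unfolding y_def lin2 g'_def lin by (simp add: s_def algebra_simps)
      qed
      ultimately have "(\<Sum>r\<in>I. f r * y r) = 0" using insert.prems by blast
      then show "(\<Sum>r\<in>I. f' r * x r) = 0"
        unfolding y_def lin2 f'_def lin by (simp add: s_def algebra_simps)
    qed
    then obtain c where c: "\<forall>r\<in>I. f' r = (\<Sum>k\<in>K. c k * g' k r)" using insert.IH by blast
    define c' where "c' = c(k0 := phi f - (\<Sum>k\<in>K. c k * phi (g k)))"
    show ?thesis
    proof (intro exI ballI)
      fix r assume r: "r \<in> I"
      have "(\<Sum>k\<in>insert k0 K. c' k * g k r) = c' k0 * h r + (\<Sum>k\<in>K. c' k * g k r)"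
        using insert.hyps by (simp add: h_def)
      also have "(\<Sum>k\<in>K. c' k * g k r) = (\<Sum>k\<in>K. c k * g k r)"
        using insert.hyps by (intro sum.cong) (auto simp: c'_def)
      also have "c' k0 = phi f - (\<Sum>k\<in>K. c k * phi (g k))" by (simp add: c'_def)
      finally have e: "(\<Sum>k\<in>insert k0 K. c' k * g k r) = (phi f - (\<Sum>k\<in>K. c k * phi (g k))) * h r + (\<Sum>k\<in>K. c k * g k r)" .
      have "f r = phi f * h r + (\<Sum>k\<in>K. c k * g' k r)" using c r by (simp add: f'_def algebra_simps)
      also have "(\<Sum>k\<in>K. c k * g' k r) = (\<Sum>k\<in>K. c k * g k r) - (\<Sum>k\<in>K. c k * phi (g k)) * h r"
      proof -
        have "(\<Sum>k\<in>K. c k * g' k r) = (\<Sum>k\<in>K. c k * g k r - (c k * phi (g k)) * h r)"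
          by (simp add: g'_def right_diff_distrib mult.assoc)
        then show ?thesis by (simp add: sum_subtractf sum_distrib_right)
      qed
      finally show "f r = (\<Sum>k\<in>insert k0 K. c' k * g k r)" using e
        apply (simp add: algebra_simps) by (metis add_right_cancel)
    qed
  qed
qed



lemma ite_mult3: "(x::'a::semiring_0) * (if b then y else 0) = (if b then x * y else 0)" by simp

lemma qcar_mem: "(i,j,k) \<in> qcar ns \<longleftrightarrow> i < length ns \<and> j < ns ! i \<and> k < ns ! i"
  by (simp add: qcar_def)

lemma qmult_at: "(i,j,k) \<in> qcar ns \<Longrightarrow> qmult ns x y (i,j,k) = (\<Sum>l<ns ! i. x (i,j,l) * y (i,l,k))"
  by (simp add: qmult_def)

lemma qmult_basis_sum:
  assumes t: "t \<in> qcar ns"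
  shows "(\<Sum>s\<in>qcar ns. a s * qmult ns (qbasis s) y t) = qmult ns a (y::qidx \<Rightarrow> complex) t"
proof -
  obtain i j k where tt: "t = (i,j,k)" by (cases t) auto
  have m: "(i,j,k) \<in> qcar ns" using t tt by simp
  have "(\<Sum>s\<in>qcar ns. a s * qmult ns (qbasis s) y t)
      = (\<Sum>s\<in>qcar ns. \<Sum>l<ns ! i. a s * (qbasis s (i,j,l) * y (i,l,k)))"
    using m by (simp add: tt qmult_at sum_distrib_left)
  also have "\<dots> = (\<Sum>l<ns ! i. \<Sum>s\<in>qcar ns. (if (i,j,l) = s then a s * y (i,l,k) else 0))"
    by (subst sum.swap) (simp add: qbasis_def ite_mult1 ite_mult3)
  also have "\<dots> = (\<Sum>l<ns ! i. a (i,j,l) * y (i,l,k))"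
    using m finite_qcar[of ns] by (intro sum.cong) (auto simp: sum.delta qcar_mem)
  finally show ?thesis using m by (simp add: tt qmult_at)
qed

context
  fixes sc :: "complex \<Rightarrow> 'b::ring_1" and st :: "'b \<Rightarrow> 'b"
  assumes SA: "star_algebra sc st"
begin

lemma fixed_vec:
  assumes comm: "eqI (qcar ns) (mm (qcar ns) (Lf sc T) U) (mm (qcar ns) U (Lf sc T))"
    and unit: "\<forall>p\<in>qcar ns. (\<Sum>t\<in>qcar ns. U p t * sc (qunit ns t)) = sc (qunit ns p)"
    and p: "p \<in> qcar ns"
  shows "(\<Sum>t\<in>qcar ns. U p t * sc (qapp ns T (qunit ns) t)) = sc (qapp ns T (qunit ns) p)"
proof -
  let ?I = "qcar ns"
  have "(\<Sum>t\<in>?I. U p t * sc (qapp ns T (qunit ns) t))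
      = (\<Sum>t\<in>?I. \<Sum>r\<in>?I. U p t * sc (T t r) * sc (qunit ns r))"
    by (intro sum.cong) (auto simp: qapp_def sc_sum[OF SA] sc_mult[OF SA] sum_distrib_left mult.assoc)
  also have "\<dots> = (\<Sum>r\<in>?I. mm ?I U (Lf sc T) p r * sc (qunit ns r))"
    by (subst sum.swap) (simp add: mm_def Lf_def sum_distrib_right)
  also have "\<dots> = (\<Sum>r\<in>?I. mm ?I (Lf sc T) U p r * sc (qunit ns r))"
    using comm p by (intro sum.cong) (auto simp: eqI_def)
  also have "\<dots> = (\<Sum>t\<in>?I. sc (T p t) * (\<Sum>r\<in>?I. U t r * sc (qunit ns r)))"
    by (simp add: mm_def Lf_def sum_distrib_right sum_distrib_left mult.assoc) (rule sum.swap)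
  also have "\<dots> = (\<Sum>t\<in>?I. sc (T p t) * sc (qunit ns t))"
    using unit by (intro sum.cong) auto
  also have "\<dots> = sc (qapp ns T (qunit ns) p)"
    using p by (simp add: qapp_def sc_sum[OF SA] sc_mult[OF SA])
  finally show ?thesis .
qed

lemma deg_comm:
  assumes fix_a: "\<forall>p\<in>qcar ns. (\<Sum>t\<in>qcar ns. U p t * sc (a t)) = sc (a p)"
    and mult: "\<forall>q\<in>qcar ns. \<forall>r\<in>qcar ns. \<forall>p\<in>qcar ns.
        qmult ns (qcol ns U q) (qcol ns U r) p
          = (\<Sum>t\<in>qcar ns. U p t * sc (qmult ns (qbasis q) (qbasis r) t))"
  shows "eqI (qcar ns) (mm (qcar ns) (Lf sc (\<lambda>p q. qmult ns a (qbasis q) p)) U)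
                       (mm (qcar ns) U (Lf sc (\<lambda>p q. qmult ns a (qbasis q) p)))"
  unfolding eqI_def
proof (intro ballI)
  let ?I = "qcar ns"
  fix p q assume p: "p \<in> ?I" and q: "q \<in> ?I"
  obtain i j k where pp: "p = (i,j,k)" by (cases p) auto
  have m: "(i,j,k) \<in> ?I" using p pp by simp
  have mem: "l < ns ! i \<Longrightarrow> (i,j,l) \<in> ?I \<and> (i,l,k) \<in> ?I" for l using m by (simp add: qcar_mem)
  have sq: "sc (qbasis r x) = (if x = r then 1 else 0)" for r x
    by (simp add: qbasis_def sc_one[OF SA] sc_zero[OF SA])
  have "mm ?I (Lf sc (\<lambda>p q. qmult ns a (qbasis q) p)) U p q
      = (\<Sum>r\<in>?I. \<Sum>l<ns ! i. sc (a (i,j,l)) * (if (i,l,k) = r then U r q else 0))"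
    using m by (simp add: mm_def Lf_def pp qmult_at sc_sum[OF SA] sc_mult[OF SA] sq sum_distrib_right
          mult.assoc ite_mult1)
  also have "\<dots> = (\<Sum>l<ns ! i. sc (a (i,j,l)) * U (i,l,k) q)"
    by (subst sum.swap) (intro sum.cong refl, simp add: sum_distrib_left[symmetric] sum.delta' finite_qcar mem)
  finally have L: "mm ?I (Lf sc (\<lambda>p q. qmult ns a (qbasis q) p)) U p q = (\<Sum>l<ns ! i. sc (a (i,j,l)) * U (i,l,k) q)" .
  have "mm ?I U (Lf sc (\<lambda>p q. qmult ns a (qbasis q) p)) p q
      = (\<Sum>t\<in>?I. U p t * sc (\<Sum>s\<in>?I. a s * qmult ns (qbasis s) (qbasis q) t))"
    by (simp add: mm_def Lf_def qmult_basis_sum)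
  also have "\<dots> = (\<Sum>s\<in>?I. (\<Sum>t\<in>?I. U p t * sc (qmult ns (qbasis s) (qbasis q) t)) * sc (a s))"
  proof -
    have "(\<Sum>t\<in>?I. U p t * sc (\<Sum>s\<in>?I. a s * qmult ns (qbasis s) (qbasis q) t))
        = (\<Sum>t\<in>?I. \<Sum>s\<in>?I. U p t * sc (qmult ns (qbasis s) (qbasis q) t * a s))"
      by (intro sum.cong refl) (simp add: sc_sum[OF SA] sum_distrib_left mult.commute)
    also have "\<dots> = (\<Sum>s\<in>?I. \<Sum>t\<in>?I. U p t * sc (qmult ns (qbasis s) (qbasis q) t) * sc (a s))"
      by (subst sum.swap) (simp add: sc_mult[OF SA] mult.assoc)
    finally show ?thesis by (simp add: sum_distrib_right)
  qed
  also have "\<dots> = (\<Sum>s\<in>?I. qmult ns (qcol ns U s) (qcol ns U q) p * sc (a s))"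
    using mult p q by (intro sum.cong) auto
  also have "\<dots> = (\<Sum>s\<in>?I. \<Sum>l<ns ! i. U (i,j,l) s * sc (a s) * U (i,l,k) q)"
  proof (intro sum.cong refl)
    fix s assume "s \<in> ?I"
    have e: "U (i,j,l) s * U (i,l,k) q * sc (a s) = U (i,j,l) s * sc (a s) * U (i,l,k) q" for l
      by (simp only: mult.assoc sc_central[OF SA, of "a s" "U (i,l,k) q"])
    show "qmult ns (qcol ns U s) (qcol ns U q) p * sc (a s) = (\<Sum>l<ns ! i. U (i,j,l) s * sc (a s) * U (i,l,k) q)"
      using m mem by (simp add: pp qmult_at qcol_def sum_distrib_right e)
  qed
  also have "\<dots> = (\<Sum>l<ns ! i. (\<Sum>s\<in>?I. U (i,j,l) s * sc (a s)) * U (i,l,k) q)"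
    by (subst sum.swap) (simp add: sum_distrib_right)
  also have "\<dots> = (\<Sum>l<ns ! i. sc (a (i,j,l)) * U (i,l,k) q)"
    using fix_a mem by (intro sum.cong) auto
  finally show "mm ?I (Lf sc (\<lambda>p q. qmult ns a (qbasis q) p)) U p q = mm ?I U (Lf sc (\<lambda>p q. qmult ns a (qbasis q) p)) p q"
    using L by simp
qed

end


lemma ite_mult0: "(if b then x else 0) * (y::'a::semiring_0) = (if b then x * y else 0)" by simp
lemma ite_mult4: "(y::'a::semiring_0) * (if b then x else 0) = (if b then y * x else 0)" by simp
lemma mm_zero_right: "mm I X (\<lambda>_ _. 0) = (\<lambda>_ _. 0)" by (simp add: mm_def)

context
  fixes sc :: "complex \<Rightarrow> 'b::ring_1" and st :: "'b \<Rightarrow> 'b"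
  assumes SA: "star_algebra sc st"
begin


lemma shift_comm:
  assumes "eqI (qcar ns) (mm (qcar ns) (Lf sc D) V) (mm (qcar ns) V (Lf sc D))"
  shows "eqI (qcar ns) (mm (qcar ns) (Lf sc (\<lambda>p q. D p q - (if p = q then lam else 0))) V)
                       (mm (qcar ns) V (Lf sc (\<lambda>p q. D p q - (if p = q then lam else 0))))"
  unfolding eqI_def
proof (intro ballI)
  let ?I = "qcar ns"
  fix p q assume p: "p \<in> ?I" and q: "q \<in> ?I"
  have si: "sc (if b then lam else 0) = (if b then sc lam else 0)" for b by (simp add: sc_zero[OF SA])
  have "mm ?I (Lf sc (\<lambda>p q. D p q - (if p = q then lam else 0))) V p q
      = mm ?I (Lf sc D) V p q - (\<Sum>r\<in>?I. (if p = r then sc lam * V r q else 0))"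
    by (simp add: mm_def Lf_def sc_diff[OF SA] si left_diff_distrib sum_subtractf ite_mult0)
  also have "\<dots> = mm ?I (Lf sc D) V p q - sc lam * V p q" using p finite_qcar by (simp add: sum.delta)
  also have "\<dots> = mm ?I V (Lf sc D) p q - V p q * sc lam" using assms p q sc_central[OF SA, of lam "V p q"] by (simp add: eqI_def)
  also have "\<dots> = mm ?I V (Lf sc D) p q - (\<Sum>r\<in>?I. (if r = q then V p r * sc lam else 0))" using q finite_qcar by (simp add: sum.delta')
  also have "\<dots> = mm ?I V (Lf sc (\<lambda>p q. D p q - (if p = q then lam else 0))) p q"
    by (simp add: mm_def Lf_def sc_diff[OF SA] si right_diff_distrib sum_subtractf ite_mult4)
  finally show "mm ?I (Lf sc (\<lambda>p q. D p q - (if p = q then lam else 0))) V p q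
     = mm ?I V (Lf sc (\<lambda>p q. D p q - (if p = q then lam else 0))) p q" .
qed


lemma proj_step:
  assumes QMN: "\<forall>p\<in>qcar ns. \<forall>q\<in>qcar ns. (if p = q then 1 else 0) - P p q = (\<Sum>r\<in>qcar ns. M p r * N r q)"
    and NP: "\<forall>p\<in>qcar ns. \<forall>q\<in>qcar ns. (\<Sum>r\<in>qcar ns. N p r * P r q) = 0"
    and comm: "eqI (qcar ns) (mm (qcar ns) (Lf sc N) V) (mm (qcar ns) V (Lf sc N))"
  shows "eqI (qcar ns) (mm (qcar ns) V (Lf sc P)) (mm (qcar ns) (Lf sc P) (mm (qcar ns) V (Lf sc P)))"
proof -
  let ?I = "qcar ns"
  define X where "X = mm ?I V (Lf sc P)"
  have z: "eqI ?I (Lf sc (qcomp ns N P)) (\<lambda>_ _. 0)"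
    using NP by (simp add: eqI_def Lf_def qcomp_def sc_zero[OF SA])
  have "eqI ?I (mm ?I (Lf sc N) X) (mm ?I (mm ?I (Lf sc N) V) (Lf sc P))"
    by (simp add: X_def mm_assoc[OF finite_qcar] eqI_refl)
  also have "eqI ?I \<dots> (mm ?I (mm ?I V (Lf sc N)) (Lf sc P))"
    by (rule mm_cong[OF comm eqI_refl])
  also have "eqI ?I (mm ?I (mm ?I V (Lf sc N)) (Lf sc P)) (mm ?I V (Lf sc (qcomp ns N P)))"
    by (simp add: mm_assoc[OF finite_qcar] Lf_mm_qcomp[OF SA] eqI_refl)
  also have "eqI ?I \<dots> (\<lambda>_ _. 0)"
    using mm_cong[OF eqI_refl z, of V] by (simp add: mm_zero_right)
  finally have NX: "eqI ?I (mm ?I (Lf sc N) X) (\<lambda>_ _. 0)" .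
  have QMN': "eqI ?I (Lf sc (\<lambda>p q. (if p = q then 1 else 0) - P p q)) (Lf sc (qcomp ns M N))"
    using QMN by (simp add: eqI_def Lf_def qcomp_def)
  have "eqI ?I (mm ?I (Lf sc (\<lambda>p q. (if p = q then 1 else 0) - P p q)) X) (mm ?I (Lf sc (qcomp ns M N)) X)"
    by (rule mm_cong[OF QMN' eqI_refl])
  also have "eqI ?I (mm ?I (Lf sc (qcomp ns M N)) X) (mm ?I (Lf sc M) (mm ?I (Lf sc N) X))"
    by (simp add: mm_assoc[OF finite_qcar] Lf_mm_qcomp[OF SA, symmetric] eqI_refl)
  also have "eqI ?I \<dots> (\<lambda>_ _. 0)"
    using mm_cong[OF eqI_refl NX, of "Lf sc M"] by (simp add: mm_zero_right)
  finally have QX: "eqI ?I (mm ?I (Lf sc (\<lambda>p q. (if p = q then 1 else 0) - P p q)) X) (\<lambda>_ _. 0)" .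
  have si: "sc (if b then 1 else 0) = (if b then 1 else 0)" for b by (simp add: sc_zero[OF SA] sc_one[OF SA])
  have "mm ?I (Lf sc (\<lambda>p q. (if p = q then 1 else 0) - P p q)) X p q = X p q - mm ?I (Lf sc P) X p q"
    if "p \<in> ?I" for p q
    using that finite_qcar
    by (simp add: mm_def Lf_def sc_diff[OF SA] si left_diff_distrib sum_subtractf ite_mult1 sum.delta)
  then show ?thesis using QX by (simp add: eqI_def X_def)
qed

end


lemma eig_NP:
  assumes proj: "is_orth_proj ns P (eigenspace ns D lam)"
    and p: "p \<in> qcar ns" and q: "q \<in> qcar ns"
  shows "(\<Sum>r\<in>qcar ns. (D p r - (if p = r then lam else 0)) * P r q) = 0"
proof -
  let ?I = "qcar ns"
  define x where "x = qapp ns P (qbasis q)"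
  have "x \<in> range (qapp ns P)" by (simp add: x_def)
  then have "x \<in> eigenspace ns D lam" using proj by (simp add: is_orth_proj_def)
  then have e: "qapp ns D x = (\<lambda>p. lam * x p)" by (simp add: eigenspace_def)
  have xr: "r \<in> ?I \<Longrightarrow> x r = P r q" for r
    using q finite_qcar by (simp add: x_def qapp_def qbasis_def ite_mult2 sum.delta' cong: if_cong)
  have "(\<Sum>r\<in>?I. D p r * P r q) = (\<Sum>r\<in>?I. D p r * x r)" using xr by (intro sum.cong) auto
  also have "\<dots> = qapp ns D x p" using p by (simp add: qapp_def)
  also have "\<dots> = lam * P p q" using e xr[OF p] by simp
  finally have "(\<Sum>r\<in>?I. D p r * P r q) = lam * P p q" .
  then show ?thesis using p finite_qcar
    by (simp add: left_diff_distrib sum_subtractf ite_mult0 sum.delta)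
qed

lemma eig_ker:
  assumes proj: "is_orth_proj ns P (eigenspace ns D lam)"
    and p: "p \<in> qcar ns"
    and H: "\<forall>k\<in>qcar ns. (\<Sum>r\<in>qcar ns. (D k r - (if k = r then lam else 0)) * x r) = 0"
  shows "(\<Sum>r\<in>qcar ns. ((if p = r then 1 else 0) - P p r) * x r) = 0"
proof -
  let ?I = "qcar ns"
  define x' where "x' = (\<lambda>r. if r \<in> ?I then x r else 0)"
  have Dx: "k \<in> ?I \<Longrightarrow> (\<Sum>r\<in>?I. D k r * x r) = lam * x k" for k
    using H[rule_format, of k] finite_qcar
    by (simp add: left_diff_distrib sum_subtractf ite_mult0 sum.delta)
  have "qapp ns D x' = (\<lambda>p. lam * x' p)"
  proof
    fix k show "qapp ns D x' k = lam * x' k"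
      using Dx[of k] by (simp add: qapp_def x'_def)
  qed
  then have "x' \<in> eigenspace ns D lam" by (simp add: eigenspace_def x'_def)
  then have "x' \<in> range (qapp ns P)" using proj by (simp add: is_orth_proj_def)
  then obtain y where y: "x' = qapp ns P y" by blast
  have PP: "\<forall>p\<in>?I. \<forall>s\<in>?I. (\<Sum>r\<in>?I. P p r * P r s) = P p s"
    using proj by (simp add: is_orth_proj_def qop_eq_def qcomp_def)
  have "(\<Sum>r\<in>?I. P p r * x r) = (\<Sum>r\<in>?I. P p r * x' r)" by (intro sum.cong) (auto simp: x'_def)
  also have "\<dots> = (\<Sum>r\<in>?I. \<Sum>s\<in>?I. P p r * P r s * y s)"
    by (intro sum.cong refl) (simp add: y qapp_def sum_distrib_left mult.assoc)
  also have "\<dots> = (\<Sum>s\<in>?I. (\<Sum>r\<in>?I. P p r * P r s) * y s)"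
    by (subst sum.swap) (simp add: sum_distrib_right)
  also have "\<dots> = (\<Sum>s\<in>?I. P p s * y s)" using PP p by (intro sum.cong) auto
  also have "\<dots> = x' p" using p by (simp add: y qapp_def)
  also have "\<dots> = x p" using p by (simp add: x'_def)
  finally have "(\<Sum>r\<in>?I. P p r * x r) = x p" .
  then show ?thesis using p finite_qcar
    by (simp add: left_diff_distrib sum_subtractf ite_mult1 sum.delta)
qed

lemma eig_factor:
  assumes proj: "is_orth_proj ns P (eigenspace ns D lam)"
  shows "\<exists>M. \<forall>p\<in>qcar ns. \<forall>q\<in>qcar ns. (if p = q then 1 else 0) - P p q
            = (\<Sum>r\<in>qcar ns. M p r * (D r q - (if r = q then lam else 0)))"
proof -
  have "\<forall>p\<in>qcar ns. \<exists>c. \<forall>q\<in>qcar ns. (if p = q then 1 else 0) - P p q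
            = (\<Sum>r\<in>qcar ns. c r * (D r q - (if r = q then lam else 0)))"
  proof
    fix p assume p: "p \<in> qcar ns"
    show "\<exists>c. \<forall>q\<in>qcar ns. (if p = q then 1 else 0) - P p q
            = (\<Sum>r\<in>qcar ns. c r * (D r q - (if r = q then lam else 0)))"
      using rowspace[OF finite_qcar finite_qcar, where g = "\<lambda>k r. D k r - (if k = r then lam else 0)"
          and f = "\<lambda>r. (if p = r then 1 else 0) - P p r"] eig_ker[OF proj p] by blast
  qed
  then show ?thesis by (rule bchoice)
qed

theorem proposition2p5:
  fixes ns :: "nat list" and A D P :: "qidx \<Rightarrow> qidx \<Rightarrow> complex" and lam :: complex
    and sc :: "complex \<Rightarrow> 'b::ring_1" and st :: "'b \<Rightarrow> 'b" and U :: "qidx \<Rightarrow> qidx \<Rightarrow> 'b"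
  assumes "quantum_graph ns A"
    and "D = degL ns A \<or> D = degR ns A"
    and "eigenspace ns D lam \<noteq> {\<lambda>_. 0}"
    and "is_orth_proj ns P (eigenspace ns D lam)"
    and "star_algebra sc st"
    and "qut_rel ns A sc st U"
  shows "qintertwines ns sc U P"
proof -
  let ?I = "qcar ns"
  have SA: "star_algebra sc st" by fact
  have proj: "is_orth_proj ns P (eigenspace ns D lam)" by fact
  define Us where "Us = adjB ns sc st U"
  have QR: "qut_rel ns A sc st U" by fact
  have UUs: "eqI ?I (mm ?I U Us) idm" and UsU: "eqI ?I (mm ?I Us U) idm"
    using QR by (simp_all add: qut_rel_def Let_def eqI_def mm_def idm_def Us_def adjB_def)
  have mult: "\<forall>q\<in>qcar ns. \<forall>r\<in>qcar ns. \<forall>p\<in>qcar ns.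
        qmult ns (qcol ns U q) (qcol ns U r) p
          = (\<Sum>t\<in>qcar ns. U p t * sc (qmult ns (qbasis q) (qbasis r) t))"
    and unit: "\<forall>p\<in>qcar ns. (\<Sum>t\<in>qcar ns. U p t * sc (qunit ns t)) = sc (qunit ns p)"
    and AU: "eqI ?I (mm ?I (Lf sc A) U) (mm ?I U (Lf sc A))"
    using QR by (simp_all add: qut_rel_def Let_def eqI_def mm_def Lf_def)
  have TU: "eqI ?I (mm ?I (Lf sc T) U) (mm ?I U (Lf sc T)) \<Longrightarrow>
        eqI ?I (mm ?I (Lf sc (\<lambda>p q. qmult ns (qapp ns T (qunit ns)) (qbasis q) p)) U)
               (mm ?I U (Lf sc (\<lambda>p q. qmult ns (qapp ns T (qunit ns)) (qbasis q) p)))" for T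
    by (rule deg_comm[OF SA _ mult]) (use fixed_vec[OF SA _ unit] in blast)
  have DU: "eqI ?I (mm ?I (Lf sc D) U) (mm ?I U (Lf sc D))"
    using assms(2)
  proof
    assume "D = degL ns A"
    then show ?thesis using TU[OF AU] by (simp add: degL_def)
  next
    assume "D = degR ns A"
    have "eqI ?I (mm ?I (adjB ns sc st U) (adjB ns sc st (Lf sc A))) (adjB ns sc st (mm ?I (Lf sc A) U))"
      by (rule eqI_sym[OF adjB_mm_eqI[OF SA]])
    also have "eqI ?I \<dots> (adjB ns sc st (mm ?I U (Lf sc A)))" by (rule adjB_cong[OF SA AU])
    also have "eqI ?I \<dots> (mm ?I (adjB ns sc st (Lf sc A)) (adjB ns sc st U))" by (rule adjB_mm_eqI[OF SA])
    finally have "eqI ?I (mm ?I (Lf sc (qadj ns A)) Us) (mm ?I Us (Lf sc (qadj ns A)))"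
      by (simp add: adjB_Lf[OF SA] Us_def eqI_sym)
    then have "eqI ?I (mm ?I (Lf sc (qadj ns A)) U) (mm ?I U (Lf sc (qadj ns A)))"
      by (rule comm_inverse[OF finite_qcar UsU UUs])
    then show ?thesis using TU `D = degR ns A` by (simp add: degR_def)
  qed
  define N where "N = (\<lambda>p q. D p q - (if p = q then lam else (0::complex)))"
  have NU: "eqI ?I (mm ?I (Lf sc N) U) (mm ?I U (Lf sc N))"
    unfolding N_def by (rule shift_comm[OF SA DU])
  have NUs: "eqI ?I (mm ?I (Lf sc N) Us) (mm ?I Us (Lf sc N))"
    by (rule comm_inverse[OF finite_qcar UUs UsU NU])
  obtain M where QMN: "\<forall>p\<in>?I. \<forall>q\<in>?I. (if p = q then 1 else 0) - P p q = (\<Sum>r\<in>?I. M p r * N r q)"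
    using eig_factor[OF proj] unfolding N_def by blast
  have NP: "\<forall>p\<in>?I. \<forall>q\<in>?I. (\<Sum>r\<in>?I. N p r * P r q) = 0"
    using eig_NP[OF proj] unfolding N_def by blast
  have stepU: "eqI ?I (mm ?I U (Lf sc P)) (mm ?I (Lf sc P) (mm ?I U (Lf sc P)))"
    by (rule proj_step[OF SA QMN NP NU])
  have stepUs: "eqI ?I (mm ?I Us (Lf sc P)) (mm ?I (Lf sc P) (mm ?I Us (Lf sc P)))"
    by (rule proj_step[OF SA QMN NP NUs])
  have Padj: "eqI ?I (adjB ns sc st (Lf sc P)) (Lf sc P)"
    unfolding adjB_Lf[OF SA] using proj by (simp add: is_orth_proj_def qop_eq_def eqI_def Lf_def)
  have UsUs: "eqI ?I (adjB ns sc st Us) U"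
    by (simp add: eqI_def Us_def adjB_adjB[OF SA])
  have L1: "eqI ?I (adjB ns sc st (mm ?I Us (Lf sc P))) (mm ?I (Lf sc P) U)"
    by (rule eqI_trans[OF adjB_mm_eqI[OF SA] mm_cong[OF Padj UsUs]])
  have R1: "eqI ?I (adjB ns sc st (mm ?I (Lf sc P) (mm ?I Us (Lf sc P)))) (mm ?I (mm ?I (Lf sc P) U) (Lf sc P))"
    by (rule eqI_trans[OF adjB_mm_eqI[OF SA] mm_cong[OF L1 Padj]])
  have "eqI ?I (mm ?I (Lf sc P) U) (adjB ns sc st (mm ?I Us (Lf sc P)))"
    by (rule eqI_sym[OF L1])
  also have "eqI ?I \<dots> (adjB ns sc st (mm ?I (Lf sc P) (mm ?I Us (Lf sc P))))"
    by (rule adjB_cong[OF SA stepUs])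
  also have "eqI ?I \<dots> (mm ?I (mm ?I (Lf sc P) U) (Lf sc P))" by (rule R1)
  also have "eqI ?I \<dots> (mm ?I (Lf sc P) (mm ?I U (Lf sc P)))"
    by (simp add: mm_assoc[OF finite_qcar] eqI_refl)
  also have "eqI ?I \<dots> (mm ?I U (Lf sc P))" by (rule eqI_sym[OF stepU])
  finally show ?thesis by (simp add: qintertwines_def eqI_def mm_def Lf_def)
qed


end
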